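(* Let $a\geq 1$ and $b\geq 2$ be integers. For Lebesgue-almost every $x\in D$ we have $\lim_{k\to\infty}T_{a,b}^k(x)=(0,\ldots,0,x_{a+2}^{\infty},\ldots,x_{a+b}^{\infty})$ (first $a+1$ coordinates equal to $0$), where $x_j^{\infty}>0$ for $j=a+2,\ldots,a+b$.
   Context: For $n\geq 1$ let $\Lambda^n=\{x\in\mathbb{R}^n : 0\leq x_1\leq\cdots\leq x_n\}$. For integers $a,b\geq 1$ the map $T_{a,b}:\Lambda^{a+b}\to\Lambda^{a+b}$ sends $x$ to the vector obtained by arranging $x_1,\ldots,x_a,\,x_{a+1}-x_a,\ldots,x_{a+b}-x_a$ in nondecreasing order. For $b\geq 2$, $D=\{x\in\Lambda^{a+b}: x_1+x_2+\cdots+x_{a+1}\leq x_{a+2}\}$. *)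

theory Defs
  imports "HOL-Analysis.Analysis" "HOL-Probability.Probability"
begin

text \<open>Points of R^n are functions nat => real, extensional on the index set {1..n}
  (coordinates are 1-based, as in the paper).\<close>

definition Lambda :: "nat \<Rightarrow> (nat \<Rightarrow> real) set" where
  "Lambda n = {x \<in> PiE {1..n} (\<lambda>_. UNIV).
      0 \<le> x 1 \<and> (\<forall>i. 1 \<le> i \<and> i < n \<longrightarrow> x i \<le> x (Suc i))}"

definition T :: "nat \<Rightarrow> nat \<Rightarrow> (nat \<Rightarrow> real) \<Rightarrow> (nat \<Rightarrow> real)" where
  "T a b x = (let L = sort (map x [1..<a+1] @ map (\<lambda>i. x i - x a) [a+1..<a+b+1])
              in restrict (\<lambda>i. L ! (i - 1)) {1..a+b})"

definition D :: "nat \<Rightarrow> nat \<Rightarrow> (nat \<Rightarrow> real) set" where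
  "D a b = {x \<in> Lambda (a+b). (\<Sum>i=1..a+1. x i) \<le> x (a+2)}"

definition lebesgue_n :: "nat \<Rightarrow> (nat \<Rightarrow> real) measure" where
  "lebesgue_n n = PiM {1..n} (\<lambda>_. lborel)"

end

theory Submission
  imports Defs
begin


declare upt_Suc[simp del]

lemma Lam_mono:
  assumes x: "x \<in> Lambda n" and i: "1 \<le> i" and ij: "i \<le> j" and jn: "j \<le> n"
  shows "x i \<le> x j"
proof -
  have "j \<le> n \<longrightarrow> x i \<le> x j" using ij
  proof (induction rule: dec_induct)
    case base then show ?case by simp
  next
    case (step m)
    show ?case
    proof
      assume "Suc m \<le> n"
      then have "x i \<le> x m" using step by simp
      moreover have "x m \<le> x (Suc m)" using x step \<open>Suc m \<le> n\<close> i by (auto simp: Lambda_def)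
      ultimately show "x i \<le> x (Suc m)" by linarith
    qed
  qed
  then show ?thesis using jn by simp
qed

lemma Lam_nonneg:
  assumes x: "x \<in> Lambda n" and i: "1 \<le> i" "i \<le> n"
  shows "0 \<le> x i"
  using Lam_mono[OF x order_refl i(1) i(2)] x by (auto simp: Lambda_def)

lemma sorted_sort_app:
  fixes xs ys :: "real list"
  assumes "sorted ys" "\<forall>u\<in>set xs. u \<le> c" "\<forall>v\<in>set ys. c \<le> v"
  shows "sorted (sort xs @ ys)"
  using assms by (auto simp: sorted_append intro: order_trans)

definition sm :: "nat \<Rightarrow> (nat \<Rightarrow> real) \<Rightarrow> real list" where
  "sm a x = map x [1..<a+1] @ [x (a+1) - x a]"

lemma T_formula:
  assumes a: "a \<ge> 1" and b: "b \<ge> 2" and xD: "x \<in> D a b"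
  shows "T a b x = restrict (\<lambda>i. if i \<le> a+1 then sort (sm a x) ! (i-1) else x i - x a) {1..a+b}"
proof -
  have xL: "x \<in> Lambda (a+b)" using xD by (simp add: D_def)
  let ?lg = "map (\<lambda>i. x i - x a) [a+2..<a+b+1]"
  have up: "[a+1..<a+b+1] = (a+1) # [a+2..<a+b+1]" using b by (simp add: upt_conv_Cons)
  have lst: "map x [1..<a+1] @ map (\<lambda>i. x i - x a) [a+1..<a+b+1] = sm a x @ ?lg"
    unfolding up by (simp add: sm_def)
  have S: "(\<Sum>i=1..a+1. x i) \<le> x (a+2)" using xD by (simp add: D_def)
  have nn: "\<And>i. 1 \<le> i \<Longrightarrow> i \<le> a+b \<Longrightarrow> 0 \<le> x i" using Lam_nonneg[OF xL] by blast
  have "(\<Sum>i\<in>{a,a+1}. x i) \<le> (\<Sum>i=1..a+1. x i)"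
    by (rule sum_mono2) (use a nn b in auto)
  then have key: "x (a+1) \<le> x (a+2) - x a" using S a by simp
  have smle: "\<forall>u\<in>set (sm a x). u \<le> x (a+1)"
    using Lam_mono[OF xL] nn a b by (auto simp: sm_def)
  have lgge: "\<forall>v\<in>set ?lg. x (a+1) \<le> v"
  proof
    fix v assume "v \<in> set ?lg"
    then have "v \<in> (\<lambda>i. x i - x a) ` {a+2..<a+b+1}" by (simp only: set_map set_upt)
    then obtain j where j: "j \<in> {a+2..<a+b+1}" "v = x j - x a" by blast
    then show "x (a+1) \<le> v" using key Lam_mono[OF xL, of "a+2" j] by simp
  qed
  have slg: "sorted ?lg" unfolding sorted_iff_nth_mono
  proof (intro allI impI)
    fix i j assume "i \<le> j" "j < length ?lg"
    then show "?lg ! i \<le> ?lg ! j" using Lam_mono[OF xL, of "a+2+i" "a+2+j"] by (simp del: upt_Suc)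
  qed
  have srt: "sort (sm a x @ ?lg) = sort (sm a x) @ ?lg"
  proof (rule properties_for_sort)
    show "sorted (sort (sm a x) @ ?lg)" by (rule sorted_sort_app[OF slg smle lgge])
  qed simp
  have len: "length (sort (sm a x)) = a+1" by (simp add: sm_def)
  show ?thesis
    unfolding T_def Let_def lst srt
  proof (rule restrict_ext)
    fix i assume i: "i \<in> {1..a+b}"
    show "(sort (sm a x) @ ?lg) ! (i - 1) = (if i \<le> a + 1 then sort (sm a x) ! (i - 1) else x i - x a)"
    proof (cases "i \<le> a+1")
      case True
      have "i - 1 < length (sort (sm a x))" using True i len by auto
      then show ?thesis using True by (simp only: nth_append if_True)
    next
      case False
      have nl: "\<not> (i - 1 < length (sort (sm a x)))" using False len by auto
      have k: "i - 1 - (a+1) < length ?lg" using False i by simp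
      have "(sort (sm a x) @ ?lg) ! (i - 1) = ?lg ! (i - 1 - (a+1))"
        using nl by (simp only: nth_append if_False len)
      also have "\<dots> = x (a + 2 + (i - 1 - (a+1))) - x a"
      proof -
        have kk: "i - 1 - (a+1) < length [a+2..<a+b+1]" using k by simp
        have "[a+2..<a+b+1] ! (i - 1 - (a+1)) = a + 2 + (i - 1 - (a+1))"
          using kk by (simp del: upt_Suc)
        then show ?thesis using nth_map[OF kk, of "\<lambda>i. x i - x a"] by simp
      qed
      also have "a + 2 + (i - 1 - (a+1)) = i" using False by simp
      finally show ?thesis using False by simp
    qed
  qed
qed

lemma D_basic:
  assumes a: "a \<ge> 1" and b: "b \<ge> 2" and xD: "x \<in> D a b"
  shows "\<forall>u\<in>set (sm a x). 0 \<le> u \<and> u \<le> x (a+1)"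
    and "x (a+1) \<le> x (a+2) - x a"
    and "\<And>i. 1 \<le> i \<Longrightarrow> i \<le> a+b \<Longrightarrow> 0 \<le> x i"
    and "\<And>i j. 1 \<le> i \<Longrightarrow> i \<le> j \<Longrightarrow> j \<le> a+b \<Longrightarrow> x i \<le> x j"
proof -
  have xL: "x \<in> Lambda (a+b)" using xD by (simp add: D_def)
  have S: "(\<Sum>i=1..a+1. x i) \<le> x (a+2)" using xD by (simp add: D_def)
  show nn: "\<And>i. 1 \<le> i \<Longrightarrow> i \<le> a+b \<Longrightarrow> 0 \<le> x i" using Lam_nonneg[OF xL] by blast
  show "\<And>i j. 1 \<le> i \<Longrightarrow> i \<le> j \<Longrightarrow> j \<le> a+b \<Longrightarrow> x i \<le> x j" using Lam_mono[OF xL] by blast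
  have "(\<Sum>i\<in>{a,a+1}. x i) \<le> (\<Sum>i=1..a+1. x i)"
    by (rule sum_mono2) (use a nn b in auto)
  then show "x (a+1) \<le> x (a+2) - x a" using S a by simp
  show "\<forall>u\<in>set (sm a x). 0 \<le> u \<and> u \<le> x (a+1)"
    using Lam_mono[OF xL] nn a b by (auto simp: sm_def)
qed

lemma T_facts:
  assumes a: "a \<ge> 1" and b: "b \<ge> 2" and xD: "x \<in> D a b"
  shows T_small: "\<And>i. i \<in> {1..a+1} \<Longrightarrow> T a b x i = sort (sm a x) ! (i-1)"
    and T_large: "\<And>j. j \<in> {a+2..a+b} \<Longrightarrow> T a b x j = x j - x a"
    and T_map: "map (T a b x) [1..<a+2] = sort (sm a x)"
proof -
  note F = T_formula[OF a b xD]
  show "\<And>i. i \<in> {1..a+1} \<Longrightarrow> T a b x i = sort (sm a x) ! (i-1)" using F b by auto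
  show "\<And>j. j \<in> {a+2..a+b} \<Longrightarrow> T a b x j = x j - x a" using F b by auto
  show "map (T a b x) [1..<a+2] = sort (sm a x)"
  proof (rule nth_equalityI)
    show "length (map (T a b x) [1..<a+2]) = length (sort (sm a x))" by (simp add: sm_def)
    fix k assume "k < length (map (T a b x) [1..<a+2])"
    then have k: "k < a+1" by simp
    then have "map (T a b x) [1..<a+2] ! k = T a b x (k+1)" by (simp del: upt_Suc)
    also have "\<dots> = sort (sm a x) ! k" using F b k by simp
    finally show "map (T a b x) [1..<a+2] ! k = sort (sm a x) ! k" .
  qed
qed

lemma sum_small:
  assumes a: "a \<ge> 1"
  shows "(\<Sum>i=1..a+1. z i) = sum_list (map z [1..<a+2])"
proof -
  have "{1..a+1} = set [1..<a+2]" by auto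
  then show ?thesis by (simp only: sum_set_upt_conv_sum_list_nat)
qed

lemma T_sum:
  assumes a: "a \<ge> 1" and b: "b \<ge> 2" and xD: "x \<in> D a b"
  shows "(\<Sum>i=1..a+1. T a b x i) = (\<Sum>i=1..a+1. x i) - x a"
proof -
  have "(\<Sum>i=1..a+1. T a b x i) = sum_list (sort (sm a x))"
    by (subst sum_small[OF a]) (simp only: T_map[OF a b xD])
  also have "\<dots> = sum_list (sm a x)" by (metis mset_sort sum_mset_sum_list)
  also have "\<dots> = sum_list (map x [1..<a+2]) - x a" by (simp add: sm_def upt_Suc)
  also have "\<dots> = (\<Sum>i=1..a+1. x i) - x a" by (simp only: sum_small[OF a])
  finally show ?thesis .
qed

lemma T_set:
  assumes a: "a \<ge> 1" and b: "b \<ge> 2" and xD: "x \<in> D a b"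
  shows "set (map (T a b x) [1..<a+2]) = set (sm a x)"
  using T_map[OF a b xD] by simp

lemma T_in_D:
  assumes a: "a \<ge> 1" and b: "b \<ge> 2" and xD: "x \<in> D a b"
  shows "T a b x \<in> D a b"
proof -
  let ?y = "T a b x"
  note B = D_basic[OF a b xD]
  have len: "length (sort (sm a x)) = a+1" by (simp add: sm_def)
  have mem: "\<And>i. i \<in> {1..a+1} \<Longrightarrow> ?y i \<in> set (sm a x)"
  proof -
    fix i assume i: "i \<in> {1..a+1}"
    have "?y i = sort (sm a x) ! (i-1)" using T_small[OF a b xD i] .
    moreover have "i - 1 < length (sort (sm a x))" using i len by auto
    ultimately show "?y i \<in> set (sm a x)" by (metis nth_mem set_sort)
  qed
  have ext: "?y \<in> PiE {1..a+b} (\<lambda>_. UNIV)"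
    using T_formula[OF a b xD] by simp
  have y1: "0 \<le> ?y 1" using mem[of 1] B(1) by auto
  have step: "?y i \<le> ?y (Suc i)" if i: "1 \<le> i" "i < a+b" for i
  proof (cases "Suc i \<le> a+1")
    case True
    have "sort (sm a x) ! (i-1) \<le> sort (sm a x) ! (Suc i - 1)"
      by (rule sorted_nth_mono) (use True i len in auto)
    then show ?thesis using T_small[OF a b xD, of i] T_small[OF a b xD, of "Suc i"] True i by simp
  next
    case False
    show ?thesis
    proof (cases "i = a+1")
      case True
      have "?y i \<le> x (a+1)" using mem[of i] B(1) True by auto
      also have "\<dots> \<le> x (a+2) - x a" using B(2) .
      also have "\<dots> = ?y (Suc i)" using T_large[OF a b xD, of "a+2"] True b by simp
      finally show ?thesis .
    next
      case F2: False
      then have "a+2 \<le> i" using False by simp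
      then show ?thesis using T_large[OF a b xD, of i] T_large[OF a b xD, of "Suc i"] i B(4)[of i "Suc i"]
        by simp
    qed
  qed
  have sumc: "(\<Sum>i=1..a+1. ?y i) \<le> ?y (a+2)"
    using T_sum[OF a b xD] T_large[OF a b xD, of "a+2"] b xD by (simp add: D_def)
  show ?thesis using ext y1 step sumc by (auto simp: D_def Lambda_def)
qed

lemma T_stuck:
  assumes a: "a \<ge> 1" and b: "b \<ge> 2" and xD: "x \<in> D a b" and st: "2 * x a \<le> x (a+1)"
  shows "\<And>i. i \<in> {1..a} \<Longrightarrow> T a b x i = x i"
proof -
  note B = D_basic[OF a b xD]
  have "sorted (sm a x)" unfolding sm_def sorted_append
  proof (intro conjI)
    show "sorted (map x [1..<a+1])" unfolding sorted_iff_nth_mono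
    proof (intro allI impI)
      fix i j assume "i \<le> j" "j < length (map x [1..<a+1])"
      then show "map x [1..<a+1] ! i \<le> map x [1..<a+1] ! j" using B(4)[of "1+i" "1+j"] by (simp del: upt_Suc)
    qed
    show "sorted [x (a + 1) - x a]" by simp
    show "\<forall>u\<in>set (map x [1..<a + 1]). \<forall>v\<in>set [x (a + 1) - x a]. u \<le> v"
    proof (intro ballI)
      fix u v assume u: "u \<in> set (map x [1..<a + 1])" and v: "v \<in> set [x (a + 1) - x a]"
      from u obtain i where i: "1 \<le> i" "i \<le> a" "u = x i" by auto
      have "x i \<le> x a" using B(4)[of i a] i b by simp
      then show "u \<le> v" using i v st by simp
    qed
  qed
  then have ss: "sort (sm a x) = sm a x" by (rule sorted_sort_id)
  fix i assume i: "i \<in> {1..a}"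
  have "T a b x i = sm a x ! (i - 1)" using T_small[OF a b xD, of i] i ss by simp
  also have "\<dots> = x i"
  proof -
    have l: "i - 1 < length (map x [1..<a+1])" using i by auto
    then have "sm a x ! (i - 1) = map x [1..<a+1] ! (i - 1)" unfolding sm_def by (simp only: nth_append if_True)
    also have "\<dots> = x i" using l i by simp
    finally show ?thesis .
  qed
  finally show "T a b x i = x i" .
qed

lemma T_mem_small:
  assumes a: "a \<ge> 1" and b: "b \<ge> 2" and xD: "x \<in> D a b" and i: "i \<in> {1..a+1}"
  shows "T a b x i \<in> set (sm a x)"
proof -
  have "T a b x i \<in> set (map (T a b x) [1..<a+2])" using i by auto
  then show ?thesis using T_set[OF a b xD] by simp
qed

lemma back_span:
  assumes a: "a \<ge> 1" and b: "b \<ge> 2" and xD: "x \<in> D a b"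
    and h: "\<forall>i\<in>{1..a+1}. \<exists>m::int. T a b x i = of_int m * g"
  shows "\<forall>i\<in>{1..a+1}. \<exists>m::int. x i = of_int m * g"
proof -
  have P: "\<exists>m::int. v = of_int m * g" if v: "v \<in> set (sm a x)" for v
  proof -
    have "v \<in> set (map (T a b x) [1..<a+2])" using v T_set[OF a b xD] by simp
    then obtain j where j: "j \<in> set [1..<a+2]" "v = T a b x j" by auto
    then have "j \<in> {1..a+1}" by auto
    then show ?thesis using h j by auto
  qed
  show ?thesis
  proof
    fix i assume i: "i \<in> {1..a+1}"
    show "\<exists>m::int. x i = of_int m * g"
    proof (cases "i \<le> a")
      case True
      then have "x i \<in> set (sm a x)" using i by (auto simp: sm_def)
      then show ?thesis by (rule P)
    next
      case False
      then have ia: "i = a+1" using i by simp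
      have "x a \<in> set (sm a x)" using a by (auto simp: sm_def)
      then obtain m1 :: int where m1: "x a = of_int m1 * g" using P by blast
      have "x (a+1) - x a \<in> set (sm a x)" by (simp add: sm_def)
      then obtain m2 :: int where m2: "x (a+1) - x a = of_int m2 * g" using P by blast
      have "x i = of_int (m1 + m2) * g" using m1 m2 ia by (simp add: algebra_simps)
      then show ?thesis by blast
    qed
  qed
qed

lemma iter_D:
  assumes a: "a \<ge> 1" and b: "b \<ge> 2"
  shows "x \<in> D a b \<Longrightarrow> (T a b ^^ k) x \<in> D a b"
  by (induction k) (auto intro: T_in_D[OF a b])

lemma iter_span:
  assumes a: "a \<ge> 1" and b: "b \<ge> 2"
  shows "x \<in> D a b \<Longrightarrow> \<forall>i\<in>{1..a+1}. \<exists>m::int. (T a b ^^ k) x i = of_int m * g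
     \<Longrightarrow> \<forall>i\<in>{1..a+1}. \<exists>m::int. x i = of_int m * g"
proof (induction k arbitrary: x)
  case 0 then show ?case by simp
next
  case (Suc k)
  have "(T a b ^^ Suc k) x = (T a b ^^ k) (T a b x)" by (simp only: funpow_Suc_right comp_def)
  then have "\<forall>i\<in>{1..a+1}. \<exists>m::int. T a b x i = of_int m * g"
    using Suc.IH[OF T_in_D[OF a b Suc.prems(1)]] Suc.prems(2) by simp
  then show ?case by (rule back_span[OF a b Suc.prems(1)])
qed

lemma main_dyn:
  assumes a: "a \<ge> 1" and b: "b \<ge> 2" and xD: "x \<in> D a b"
    and g1: "x 1 \<noteq> 0" and g2: "\<forall>r\<in>\<rat>. x 2 \<noteq> r * x 1"
    and g3: "x (a+2) \<noteq> (\<Sum>i=1..a+1. x i)"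
  shows "\<exists>y :: nat \<Rightarrow> real.
              (\<forall>j\<in>{1..a+1}. y j = 0) \<and>
              (\<forall>j\<in>{a+2..a+b}. y j > 0) \<and>
              (\<forall>j\<in>{1..a+b}. (\<lambda>k. ((T a b) ^^ k) x j) \<longlonglongrightarrow> y j)"
proof -
  define X where "X k = (T a b ^^ k) x" for k
  have XD: "X k \<in> D a b" for k unfolding X_def by (rule iter_D[OF a b xD])
  have XS: "X (Suc k) = T a b (X k)" for k by (simp add: X_def)
  define s where "s k = (\<Sum>i=1..a+1. X k i)" for k
  define u where "u k = X k a" for k
  define m where "m k = X k (a+1)" for k
  have s_step: "s (Suc k) = s k - u k" for k
    unfolding s_def u_def XS by (rule T_sum[OF a b XD])
  have u_nn: "0 \<le> u k" for k unfolding u_def using D_basic(3)[OF a b XD[of k], of a] a b by simp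
  have small: "0 \<le> X k i \<and> X k i \<le> m k" if "i \<in> {1..a+1}" for k i
    using D_basic(3)[OF a b XD[of k], of i] D_basic(4)[OF a b XD[of k], of i "a+1"] that b unfolding m_def by auto
  have m_dec: "m (Suc k) \<le> m k" for k
  proof -
    have "T a b (X k) (a+1) \<in> set (sm a (X k))" by (rule T_mem_small[OF a b XD]) simp
    then show ?thesis using D_basic(1)[OF a b XD[of k]] unfolding m_def XS by auto
  qed
  have s_le: "s k \<le> real (a+1) * m k" for k
  proof -
    have "s k \<le> (\<Sum>i=1..a+1. m k)" unfolding s_def by (rule sum_mono) (use small in auto)
    then show ?thesis by simp
  qed
  have s_nn: "0 \<le> s k" for k unfolding s_def by (rule sum_nonneg) (use small in auto)
  have m_nn: "0 \<le> m k" for k using small[of "a+1" k] by simp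
  have large: "X k j = x j - (s 0 - s k)" if j: "j \<in> {a+2..a+b}" for k j
  proof (induction k)
    case 0 then show ?case by (simp add: X_def)
  next
    case (Suc k)
    have "X (Suc k) j = X k j - u k" unfolding XS u_def by (rule T_large[OF a b XD j])
    then show ?case using Suc s_step[of k] by simp
  qed
  have X0: "X 0 = x" by (simp add: X_def)
  have "decseq m" by (rule decseq_SucI) (rule m_dec)
  then obtain Lm where Lm: "m \<longlonglongrightarrow> Lm" "\<forall>i. Lm \<le> m i"
    using decseq_convergent[of m 0] m_nn by blast
  have Lm_nn: "0 \<le> Lm" using Lm(1) m_nn by (intro LIMSEQ_le_const) auto
  have "decseq s" by (rule decseq_SucI) (use s_step u_nn in simp)
  then obtain Ls where Ls: "s \<longlonglongrightarrow> Ls"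
    using decseq_convergent[of s 0] s_nn by blast
  have u_eq: "u k = s k - s (Suc k)" for k using s_step[of k] by simp
  have "(\<lambda>k. s k - s (Suc k)) \<longlonglongrightarrow> Ls - Ls"
    by (intro tendsto_diff Ls) (rule LIMSEQ_Suc[OF Ls])
  then have u_lim: "u \<longlonglongrightarrow> 0" unfolding u_eq[abs_def] by simp
  have Lm0: "Lm = 0"
  proof (rule ccontr)
    assume "Lm \<noteq> 0"
    then have Lpos: "Lm > 0" using Lm_nn by simp
    obtain K where K: "\<forall>k\<ge>K. norm (u k - 0) < Lm / 2"
      using u_lim Lpos unfolding LIMSEQ_iff by (metis half_gt_zero)
    have stuck: "u (Suc k) = u k" if k: "k \<ge> K" for k
    proof -
      have "u k < Lm / 2" using K k u_nn by auto
      then have "2 * X k a \<le> X k (a+1)" using Lm(2)[rule_format, of k] unfolding u_def m_def by simp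
      then have "T a b (X k) a = X k a" using T_stuck[OF a b XD, of k a] a by simp
      then show ?thesis unfolding u_def XS .
    qed
    have const: "u (n + K) = u K" for n
      by (induction n) (use stuck in auto)
    have "(\<lambda>n. u (n + K)) \<longlonglongrightarrow> 0" using LIMSEQ_ignore_initial_segment[OF u_lim] .
    then have "(\<lambda>n. u K) \<longlonglongrightarrow> 0" using const by simp
    then have uK: "u K = 0" using LIMSEQ_const_iff by blast
    have zero: "X K i = 0" if i: "i \<in> {1..a}" for i
      using D_basic(3)[OF a b XD[of K], of i] D_basic(4)[OF a b XD[of K], of i a] uK i b unfolding u_def by auto
    define g where "g = X K (a+1)"
    have "\<forall>i\<in>{1..a+1}. \<exists>mm::int. (T a b ^^ K) x i = of_int mm * g"
    proof
      fix i assume i: "i \<in> {1..a+1}"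
      show "\<exists>mm::int. (T a b ^^ K) x i = of_int mm * g"
      proof (cases "i \<le> a")
        case True
        then have "(T a b ^^ K) x i = of_int 0 * g" using zero[of i] i unfolding X_def by simp
        then show ?thesis by blast
      next
        case False
        then have "i = a+1" using i by simp
        then have "(T a b ^^ K) x i = of_int 1 * g" unfolding g_def X_def by simp
        then show ?thesis by blast
      qed
    qed
    then have sp: "\<forall>i\<in>{1..a+1}. \<exists>mm::int. x i = of_int mm * g" by (rule iter_span[OF a b xD])
    have "(1::nat) \<in> {1..a+1}" "(2::nat) \<in> {1..a+1}" using a by auto
    then obtain m1 m2 :: int where m1: "x 1 = of_int m1 * g" and m2: "x 2 = of_int m2 * g"
      using sp by meson
    have m1nz: "m1 \<noteq> 0" using g1 m1 by auto
    define r where "r = of_int m2 / (of_int m1 :: real)"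
    have "r \<in> \<rat>" unfolding r_def by simp
    moreover have "x 2 = r * x 1" unfolding r_def m1 m2 using m1nz by simp
    ultimately show False using g2 by blast
  qed
  have m_lim: "m \<longlonglongrightarrow> 0" using Lm(1) Lm0 by simp
  have "(\<lambda>k. real (a+1) * m k) \<longlonglongrightarrow> real (a+1) * 0" by (intro tendsto_mult tendsto_const m_lim)
  then have hl: "(\<lambda>k. real (a+1) * m k) \<longlonglongrightarrow> 0" by simp
  have e1: "eventually (\<lambda>k. 0 \<le> s k) sequentially" using s_nn by simp
  have e2: "eventually (\<lambda>k. s k \<le> real (a+1) * m k) sequentially" using s_le by simp
  have s_lim: "s \<longlonglongrightarrow> 0"
    by (rule real_tendsto_sandwich[OF e1 e2 tendsto_const hl])
  define y where "y j = (if j \<le> a+1 then 0 else x j - s 0)" for j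
  have s0: "s 0 = (\<Sum>i=1..a+1. x i)" unfolding s_def X0 ..
  show ?thesis
  proof (intro exI conjI ballI)
    fix j assume "j \<in> {1..a+1}" then show "y j = 0" unfolding y_def by simp
  next
    fix j assume j: "j \<in> {a+2..a+b}"
    have "s 0 \<le> x (a+2)" using xD s0 by (simp add: D_def)
    then have "s 0 < x (a+2)" using g3 s0 by simp
    also have "x (a+2) \<le> x j" using D_basic(4)[OF a b xD, of "a+2" j] j by simp
    finally show "y j > 0" using j unfolding y_def by simp
  next
    fix j assume j: "j \<in> {1..a+b}"
    show "(\<lambda>k. (T a b ^^ k) x j) \<longlonglongrightarrow> y j"
    proof (cases "j \<le> a+1")
      case True
      have jj: "j \<in> {1..a+1}" using True j by simp
      have e3: "eventually (\<lambda>k. 0 \<le> X k j) sequentially" using small[OF jj] by simp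
      have e4: "eventually (\<lambda>k. X k j \<le> m k) sequentially" using small[OF jj] by simp
      have "(\<lambda>k. X k j) \<longlonglongrightarrow> 0"
        by (rule real_tendsto_sandwich[OF e3 e4 tendsto_const m_lim])
      then show ?thesis using True unfolding X_def y_def by simp
    next
      case False
      then have j2: "j \<in> {a+2..a+b}" using j by auto
      have "(\<lambda>k. x j - s 0 + s k) \<longlonglongrightarrow> x j - s 0 + 0" by (intro tendsto_add tendsto_const s_lim)
      moreover have "(\<lambda>k. X k j) = (\<lambda>k. x j - s 0 + s k)" using large[OF j2] by auto
      ultimately show ?thesis using False unfolding X_def y_def by simp
    qed
  qed
qed


lemma null_graph:
  fixes g :: "(nat \<Rightarrow> real) \<Rightarrow> real"
  assumes fin: "finite I" and iI: "i \<in> I"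
    and gm: "g \<in> borel_measurable (PiM I (\<lambda>_. lborel))"
    and gi: "\<And>x t. g (x(i:=t)) = g x"
  shows "AE x in PiM I (\<lambda>_. lborel). x i \<noteq> g x"
proof -
  interpret product_sigma_finite "\<lambda>_. lborel" by standard
  let ?N = "{x \<in> space (PiM I (\<lambda>_. lborel)). \<not> x i \<noteq> g x}"
  have Nm: "?N \<in> sets (PiM I (\<lambda>_. lborel))"
  proof -
    have c: "(\<lambda>x. x i) \<in> borel_measurable (PiM I (\<lambda>_. lborel))"
      using measurable_component_singleton[OF iI, of "\<lambda>_. lborel"] by simp
    have "{x \<in> space (PiM I (\<lambda>_. lborel)). x i = g x} \<in> sets (PiM I (\<lambda>_. lborel))"
      using c gm by (rule borel_measurable_eq)
    then show ?thesis by simp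
  qed
  have I: "insert i (I - {i}) = I" using iI by auto
  have "emeasure (PiM I (\<lambda>_. lborel)) ?N = (\<integral>\<^sup>+ x. indicator ?N x \<partial>PiM I (\<lambda>_. lborel))"
    using Nm by simp
  also have "\<dots> = (\<integral>\<^sup>+ x. (\<integral>\<^sup>+ y. indicator ?N (x(i := y)) \<partial>lborel) \<partial>(PiM (I - {i}) (\<lambda>_. lborel)))"
    using product_nn_integral_insert[of "I - {i}" i "indicator ?N"] fin Nm I by simp
  also have "\<dots> = (\<integral>\<^sup>+ x. 0 \<partial>(PiM (I - {i}) (\<lambda>_. lborel :: real measure)))"
  proof -
    have *: "(\<integral>\<^sup>+ y. indicator ?N (x(i := y)) \<partial>lborel) = 0"
      if x: "x \<in> space (PiM (I - {i}) (\<lambda>_. lborel))" for x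
    proof -
    have "(\<lambda>y. indicator ?N (x(i := y)) :: ennreal) = indicator {g x}"
    proof
      fix y
      have "x(i:=y) \<in> space (PiM I (\<lambda>_. lborel))"
        using x iI by (auto simp: space_PiM PiE_def extensional_def)
      then show "indicator ?N (x(i := y)) = (indicator {g x} y :: ennreal)"
        using gi[of x y] by (auto simp: indicator_def)
    qed
    then show ?thesis by simp
    qed
    show ?thesis apply (rule nn_integral_cong) using * by simp
  qed
  finally have "emeasure (PiM I (\<lambda>_. lborel)) ?N = 0" by simp
  then show ?thesis using AE_iff_measurable[OF Nm refl] by simp
qed


theorem lemma4p7:
  fixes a b :: nat
  assumes "a \<ge> 1" and "b \<ge> 2"
  shows "AE x in lebesgue_n (a+b). x \<in> D a b \<longrightarrow>
           (\<exists>y :: nat \<Rightarrow> real.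
              (\<forall>j\<in>{1..a+1}. y j = 0) \<and>
              (\<forall>j\<in>{a+2..a+b}. y j > 0) \<and>
              (\<forall>j\<in>{1..a+b}. (\<lambda>k. ((T a b) ^^ k) x j) \<longlonglongrightarrow> y j))"
proof -
  note a = assms(1) and b = assms(2)
  let ?M = "PiM {1..a+b} (\<lambda>_. lborel :: real measure)"
  have M: "lebesgue_n (a+b) = ?M" by (simp add: lebesgue_n_def)
  have fin: "finite {1..a+b}" by simp
  have i1: "1 \<in> {1..a+b}" and i2: "2 \<in> {1..a+b}" and i3: "a+2 \<in> {1..a+b}" using a b by auto
  have G1: "AE x in ?M. x 1 \<noteq> (\<lambda>_. 0) x"
    by (rule null_graph[OF fin i1]) auto
  have c1: "(\<lambda>x. x 1) \<in> borel_measurable ?M"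
    using measurable_component_singleton[OF i1, of "\<lambda>_. lborel"] by simp
  have G2: "AE x in ?M. \<forall>r\<in>\<rat>. x 2 \<noteq> r * x 1"
  proof (subst AE_ball_countable)
    show "countable (\<rat> :: real set)" by (rule countable_rat)
    show "\<forall>r\<in>\<rat>. AE x in ?M. x 2 \<noteq> r * x 1"
    proof
      fix r :: real
      show "AE x in ?M. x 2 \<noteq> r * x 1"
        by (rule null_graph[OF fin i2, of "\<lambda>x. r * x 1"]) (use c1 in auto)
    qed
  qed
  have c3: "(\<lambda>x. \<Sum>i=1..a+1. x i) \<in> borel_measurable ?M"
  proof (rule borel_measurable_sum)
    fix i assume "i \<in> {1..a+1}"
    then have "i \<in> {1..a+b}" using b by auto
    then show "(\<lambda>x. x i) \<in> borel_measurable ?M"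
      using measurable_component_singleton[of i "{1..a+b}" "\<lambda>_. lborel"] by simp
  qed
  have G3: "AE x in ?M. x (a+2) \<noteq> (\<Sum>i=1..a+1. x i)"
    by (rule null_graph[OF fin i3, of "\<lambda>x. \<Sum>i=1..a+1. x i"]) (use c3 in auto)
  have "AE x in ?M. x 1 \<noteq> 0 \<and> (\<forall>r\<in>\<rat>. x 2 \<noteq> r * x 1) \<and> x (a+2) \<noteq> (\<Sum>i=1..a+1. x i)"
    using G1 G2 G3 by eventually_elim auto
  then show ?thesis unfolding M
    by (rule eventually_mono) (use main_dyn[OF a b] in blast)
qed

end
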